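(* Let $\mu$ be a probability measure supported on a symmetric convex domain $\Omega\subset\mathbb R^n$ with $\int_\Omega|x|\,d\mu(x)<+\infty$, and let $h$ be a positive Borel function on $\Omega$ with $b^{-1}\le h\le b$ for some $b>1$ and $\int_\Omega h\,d\mu=1$. Let $d\nu=h\,d\mu$. If $\mu$ satisfies the dilation inequality for $\mathcal K_s^n(\Omega)$ with constant $\kappa>0$, then $\nu$ satisfies the dilation inequality for $\mathcal K_s^n(\Omega)$ with constant $b^{-2}\kappa$.
   Context: Symmetric set: $K=-K$. Symmetric convex domain: nonempty open convex $\Omega=-\Omega\subset\mathbb R^n$. $\mathcal K_s^n(\Omega)$: nonempty symmetric open convex subsets of $\Omega$. For Borel $A\subset\mathbb R^n$, $\varepsilon\in(0,1)$: $A_\varepsilon:=A\cup\{x:\exists y,\ \int_0^1\mathbf 1_A((1-t)x+ty)\,dt>1-\varepsilon\}$; for a probability measure $\mu$, $\mu^*(A):=\liminf_{\varepsilon\downarrow0}(\mu(A_\varepsilon)-\mu(A))/\varepsilon$. $\mu$ satisfies the dilation inequality for $\mathcal K_s^n(\Omega)$ with $\kappa>0$ if $\mu^*(K)\ge-\kappa(1-\mu(K))\log(1-\mu(K))$ for all $K\in\mathcal K_s^n(\Omega)$. *)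

theory Defs
  imports "HOL-Analysis.Analysis" "HOL-Probability.Probability"
begin

definition dil_set :: "'a::euclidean_space set \<Rightarrow> real \<Rightarrow> 'a set" where
  "dil_set A \<epsilon> = A \<union> {x. \<exists>y. (LBINT t:{0..1}. indicator A ((1 - t) *\<^sub>R x + t *\<^sub>R y)) > 1 - \<epsilon>}"

definition dil_lower :: "'a::euclidean_space measure \<Rightarrow> 'a set \<Rightarrow> ereal" where
  "dil_lower \<mu> A = Liminf (at_right 0)
      (\<lambda>\<epsilon>. ereal ((measure \<mu> (dil_set A \<epsilon>) - measure \<mu> A) / \<epsilon>))"

definition sym_convex_sets :: "'a::euclidean_space set \<Rightarrow> 'a set set" where
  "sym_convex_sets \<Omega> = {K. K \<noteq> {} \<and> open K \<and> convex K \<and> uminus ` K = K \<and> K \<subseteq> \<Omega>}"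

definition dilation_ineq :: "'a::euclidean_space measure \<Rightarrow> 'a set \<Rightarrow> real \<Rightarrow> bool" where
  "dilation_ineq \<mu> \<Omega> \<kappa> \<longleftrightarrow>
     (\<forall>K \<in> sym_convex_sets \<Omega>.
        ereal (- \<kappa> * (1 - measure \<mu> K) * ln (1 - measure \<mu> K)) \<le> dil_lower \<mu> K)"

end

theory Submission
  imports Defs
begin

lemma div_helper:
  fixes c P Q e :: real
  assumes "c * P \<le> Q" "0 < e"
  shows "c * (P / e) \<le> Q / e"
proof -
  have "c * (P / e) = (c * P) / e" by simp
  also have "\<dots> \<le> Q / e" using assms by (intro divide_right_mono) auto
  finally show ?thesis .
qed

lemma pos_mul_ge:
  fixes w b :: real
  assumes "0 \<le> w" "1 \<le> b"
  shows "w \<le> w * b"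
  using mult_left_mono[OF assms(2) assms(1)] by simp

lemma neg_div_ge:
  fixes w b :: real
  assumes "w \<le> 0" "1 \<le> b"
  shows "w \<le> w / b"
proof -
  have "w * b \<le> w * 1" using assms by (intro mult_left_mono_neg) auto
  then show ?thesis using assms by (simp add: le_divide_eq)
qed

lemma G_key:
  fixes a c :: real
  assumes "0 < a" "a \<le> c" "c < 1"
  shows "c * ln c * (1 - a) \<le> a * ln a * (1 - c)"
proof -
  have c0: "c > 0" using assms by simp
  have l1: "ln (c / a) \<le> c / a - 1" using ln_le_minus_one[of "c/a"] assms by simp
  have l2: "ln (a / c) = ln a - ln c" using assms c0 by (simp add: ln_div)
  have l3: "ln (c / a) = ln c - ln a" using assms c0 by (simp add: ln_div)
  have "a * ln (c / a) \<le> a * (c / a - 1)" using l1 assms by (intro mult_left_mono) auto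
  also have "a * (c / a - 1) = c - a" using assms by (simp add: algebra_simps)
  finally have "a * (ln c - ln a) \<le> c - a" using l3 by simp
  hence h1: "a * ln a \<ge> a * ln c - (c - a)" by (simp add: algebra_simps)
  have h2: "ln c \<le> c - 1" using ln_le_minus_one c0 by simp
  have "a * ln a * (1 - c) \<ge> (a * ln c - (c - a)) * (1 - c)"
    using h1 assms by (intro mult_right_mono) auto
  moreover have "(a * ln c - (c - a)) * (1 - c) - c * ln c * (1 - a) = (c - a) * (-(ln c) - (1 - c))"
    by (simp add: algebra_simps)
  moreover have "(c - a) * (-(ln c) - (1 - c)) \<ge> 0" using h2 assms by simp
  ultimately show ?thesis by linarith
qed

lemma G_bound:
  fixes r s b :: real
  assumes "0 \<le> s" "s \<le> 1" "0 \<le> r" "r \<le> 1" "b > 1" "r \<le> b * s" "1 - r \<le> b * (1 - s)"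
  shows "- (1-r) * ln (1-r) \<le> b * (- (1-s) * ln (1-s))"
proof -
  have Gs: "-(1-s)*ln(1-s) \<ge> 0"
  proof (cases "s = 1")
    case False
    then have "ln (1-s) \<le> 0" using assms by simp
    then show ?thesis using assms by (simp add: mult_nonpos_nonpos)
  qed simp
  show ?thesis
  proof (cases "r \<le> s")
    case True
    show ?thesis
    proof (cases "s = 1")
      case True
      then have "r = 1" using assms by simp
      then show ?thesis using True by simp
    next
      case False
      define t where "t = 1 - s"
      define u where "u = 1 - r"
      have t0: "t > 0" using False assms t_def by simp
      have tu: "t \<le> u" using \<open>r \<le> s\<close> t_def u_def by simp
      have "ln t \<le> ln u" using t0 tu by simp
      hence "- u * ln u \<le> - u * ln t" using t0 tu by (simp add: mult_left_mono)
      also have "- u * ln t = (u / t) * (- t * ln t)" using t0 by simp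
      also have "\<dots> \<le> b * (- t * ln t)"
        using Gs t_def assms u_def t0 by (intro mult_right_mono) (auto simp: divide_le_eq)
      finally show ?thesis by (simp add: t_def u_def)
    qed
  next
    case False
    show ?thesis
    proof (cases "r = 1")
      case True
      then show ?thesis using Gs assms by simp
    next
      case r1: False
      have s0: "s > 0" using False assms by (cases "s = 0") auto
      have k: "(1-s) * ln (1-s) * (1 - (1-r)) \<le> (1-r) * ln (1-r) * (1 - (1-s))"
        using G_key[of "1-r" "1-s"] False r1 assms s0 by simp
      have "(-(1-r)*ln(1-r)) * s \<le> (-(1-s)*ln(1-s)) * r" using k by (simp add: algebra_simps)
      also have "\<dots> \<le> (-(1-s)*ln(1-s)) * (b * s)" using Gs assms by (intro mult_left_mono) auto
      finally have "(-(1-r)*ln(1-r)) * s \<le> (b * (-(1-s)*ln(1-s))) * s" by (simp add: algebra_simps)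
      then show ?thesis using s0 by simp
    qed
  qed
qed


theorem corollaryc:
  fixes M :: "'a::euclidean_space measure" and \<Omega> :: "'a set"
    and h :: "'a \<Rightarrow> real" and b \<kappa> :: real
  assumes "prob_space M" and "sets M = sets borel"
    and "open \<Omega>" and "convex \<Omega>" and "\<Omega> \<noteq> {}" and "uminus ` \<Omega> = \<Omega>"
    and "measure M \<Omega> = 1"
    and "integrable M norm"
    and "h \<in> borel_measurable borel"
    and "b > 1"
    and "\<forall>x\<in>\<Omega>. 1 / b \<le> h x \<and> h x \<le> b"
    and "(LINT x:\<Omega>|M. h x) = 1"
    and "\<kappa> > 0"
    and "dilation_ineq M \<Omega> \<kappa>"
  shows "dilation_ineq (density M (\<lambda>x. ennreal (h x))) \<Omega> (\<kappa> / b\<^sup>2)"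
proof -
  interpret M: prob_space M by fact
  note sM = assms(2)
  have spM: "space M = UNIV" using sets_eq_imp_space_eq[OF sM] by simp
  have hm[measurable]: "h \<in> borel_measurable M"
    using assms(9) measurable_cong_sets[OF sM refl] by blast
  have OmS: "\<Omega> \<in> sets M" using assms(3) sM by simp
  have AEO: "AE x in M. x \<in> \<Omega>" using M.AE_prob_1 assms(7) by simp
  have b0: "b > 0" using assms(10) by simp
  have hpos: "\<forall>x\<in>\<Omega>. 0 \<le> h x"
  proof
    fix x assume "x \<in> \<Omega>"
    then have "1 / b \<le> h x" using assms(11) by auto
    moreover have "0 < 1 / b" using b0 by simp
    ultimately show "0 \<le> h x" by linarith
  qed
  define N where "N = density M (\<lambda>x. ennreal (h x))"
  have sN: "sets N = sets M" unfolding N_def by simp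
  have spN: "space N = UNIV" unfolding N_def using spM by simp
  have eN: "emeasure N A = (\<integral>\<^sup>+ x. ennreal (h x) * indicator A x \<partial>M)" if "A \<in> sets M" for A
    unfolding N_def using that by (intro emeasure_density) auto
  have up: "emeasure N A \<le> ennreal b * emeasure M A" if A: "A \<in> sets M" for A
  proof -
    have "emeasure N A \<le> (\<integral>\<^sup>+ x. ennreal b * indicator A x \<partial>M)"
      unfolding eN[OF A]
      by (intro nn_integral_mono_AE, rule AE_mp[OF AEO]) (auto simp: assms(11) ennreal_leI split: split_indicator)
    also have "\<dots> = ennreal b * emeasure M A" using A by (simp add: nn_integral_cmult_indicator)
    finally show ?thesis .
  qed
  have lo: "ennreal (1/b) * emeasure M A \<le> emeasure N A" if A: "A \<in> sets M" for A
  proof -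
    have "ennreal (1/b) * emeasure M A = (\<integral>\<^sup>+ x. ennreal (1/b) * indicator A x \<partial>M)"
      using A by (simp add: nn_integral_cmult_indicator)
    also have "\<dots> \<le> emeasure N A"
      unfolding eN[OF A]
      by (intro nn_integral_mono_AE, rule AE_mp[OF AEO]) (auto simp: assms(11) ennreal_leI split: split_indicator)
    finally show ?thesis .
  qed
  have tot: "emeasure N UNIV = 1"
  proof -
    have int: "integrable M (\<lambda>x. indicator \<Omega> x * h x)"
    proof (rule M.integrable_const_bound[where B=b])
      show "AE x in M. norm (indicator \<Omega> x * h x) \<le> b"
      proof (rule AE_I2)
        fix x
        have "x \<in> \<Omega> \<Longrightarrow> \<bar>h x\<bar> \<le> b"
        proof -
          assume "x \<in> \<Omega>"
          then have "1 / b \<le> h x" "h x \<le> b" using assms(11) by auto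
          moreover have "0 < 1 / b" using b0 by simp
          ultimately show ?thesis by linarith
        qed
        then show "norm (indicator \<Omega> x * h x) \<le> b" using b0 by (auto simp: indicator_def)
      qed
    qed (use OmS in auto)
    have "emeasure N UNIV = (\<integral>\<^sup>+ x. ennreal (h x) \<partial>M)"
      using eN[of UNIV] sets.top[of M] spM by simp
    also have "\<dots> = (\<integral>\<^sup>+ x. ennreal (indicator \<Omega> x * h x) \<partial>M)"
      using AEO by (intro nn_integral_cong_AE) auto
    also have "\<dots> = ennreal (\<integral>x. indicator \<Omega> x * h x \<partial>M)"
      using hpos by (intro nn_integral_eq_integral int AE_I2) (auto simp: indicator_def)
    also have "(\<integral>x. indicator \<Omega> x * h x \<partial>M) = 1"
      using assms(12) by (simp add: set_lebesgue_integral_def)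
    finally show ?thesis by simp
  qed
  interpret N: prob_space N
    by (rule prob_spaceI) (simp add: spN tot)
  have upm: "measure N A \<le> b * measure M A" if A: "A \<in> sets M" for A
    using up[OF A] A sN b0 by (simp add: N.emeasure_eq_measure M.emeasure_eq_measure ennreal_mult[symmetric])
  have lom: "(1/b) * measure M A \<le> measure N A" if A: "A \<in> sets M" for A
    using lo[OF A] A sN b0 by (simp add: N.emeasure_eq_measure M.emeasure_eq_measure ennreal_mult[symmetric])
  show ?thesis
    unfolding dilation_ineq_def N_def[symmetric]
  proof
    fix K assume K: "K \<in> sym_convex_sets \<Omega>"
    then have Ko: "open K" by (simp add: sym_convex_sets_def)
    have KS: "K \<in> sets M" using Ko sM by simp
    define s where "s = measure M K"
    define r where "r = measure N K"
    define cm where "cm = - \<kappa> * (1 - s) * ln (1 - s)"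
    define cn where "cn = - (\<kappa> / b\<^sup>2) * (1 - r) * ln (1 - r)"
    have hypM: "ereal cm \<le> dil_lower M K" using assms(14) K unfolding dilation_ineq_def cm_def s_def by blast
    have s01: "0 \<le> s" "s \<le> 1" unfolding s_def by auto
    have r01: "0 \<le> r" "r \<le> 1" unfolding r_def by auto
    have rs1: "r \<le> b * s" using upm[OF KS] unfolding r_def s_def .
    have cK: "UNIV - K \<in> sets M" using sets.compl_sets[OF KS] spM by simp
    have "measure N (UNIV - K) \<le> b * measure M (UNIV - K)" using upm[OF cK] .
    moreover have "measure N (UNIV - K) = 1 - r" unfolding r_def using N.prob_compl[of K] KS sN spN by simp
    moreover have "measure M (UNIV - K) = 1 - s" unfolding s_def using M.prob_compl[of K] KS spM by simp
    ultimately have rs2: "1 - r \<le> b * (1 - s)" by simp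
    have Gb: "- (1-r) * ln (1-r) \<le> b * (- (1-s) * ln (1-s))"
      by (rule G_bound) (use s01 r01 rs1 rs2 assms(10) in auto)
    have gen1: "\<And>k L x :: real. - k * x * L = k * (- x * L)" by simp
    have gen2: "\<And>k L x :: real. (k / b\<^sup>2) * (b * (- x * L)) = (- k * x * L) / b"
      using b0 by (simp add: power2_eq_square field_simps)
    have cm0: "cm \<ge> 0"
    proof -
      have "- (1-s) * ln (1-s) \<ge> 0"
      proof (cases "s = 1")
        case False
        then have "ln (1-s) \<le> 0" using s01 by simp
        then show ?thesis using s01 by (simp add: mult_nonpos_nonpos)
      qed simp
      moreover have "cm = \<kappa> * (- (1-s) * ln (1-s))" unfolding cm_def by (rule gen1)
      ultimately show ?thesis using assms(13) by simp
    qed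
    have cncm: "cn \<le> cm / b"
    proof -
      have "cn = (\<kappa> / b\<^sup>2) * (- (1-r) * ln (1-r))" unfolding cn_def by (rule gen1)
      also have "\<dots> \<le> (\<kappa> / b\<^sup>2) * (b * (- (1-s) * ln (1-s)))"
        using Gb assms(13) by (intro mult_left_mono) auto
      also have "\<dots> = cm / b" unfolding cm_def by (rule gen2)
      finally show ?thesis .
    qed
    show "ereal cn \<le> dil_lower N K"
      unfolding dil_lower_def le_Liminf_iff
    proof (intro allI impI)
      fix y :: ereal assume y: "y < ereal cn"
      show "\<forall>\<^sub>F e in at_right 0. y < ereal ((measure N (dil_set K e) - measure N K) / e)"
      proof (cases y)
        case (real y')
        define z where "z = (if y' \<ge> 0 then y' * b else y' / b)"
        have zc: "z < cm"
        proof (cases "y' \<ge> 0")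
          case True
          have "y' < cm / b" using y real cncm by simp
          then show ?thesis using True b0 unfolding z_def by (simp add: pos_less_divide_eq)
        next
          case False
          have "y' / b < 0" using False b0 by (simp add: divide_neg_pos)
          then show ?thesis using cm0 False unfolding z_def by simp
        qed
        have ev1: "\<forall>\<^sub>F e in at_right 0. ereal z < ereal ((measure M (dil_set K e) - measure M K) / e)"
        proof -
          have A: "\<forall>y<ereal cm. \<forall>\<^sub>F e in at_right 0. y < ereal ((measure M (dil_set K e) - measure M K) / e)"
            using hypM unfolding dil_lower_def le_Liminf_iff .
          have "ereal z < ereal cm" using zc by simp
          then show ?thesis using A by blast
        qed
        have ev2: "\<forall>\<^sub>F e in at_right (0::real). 0 < e" by (simp add: eventually_at_right_less)
        show ?thesis
        proof (rule eventually_mono[OF eventually_conj[OF ev1 ev2]])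
          fix e :: real assume "ereal z < ereal ((measure M (dil_set K e) - measure M K) / e) \<and> 0 < e"
          then have ez: "z < (measure M (dil_set K e) - measure M K) / e" and e0: "0 < e" by auto
          have "y' < (measure N (dil_set K e) - measure N K) / e"
          proof (cases "dil_set K e \<in> sets M")
            case True
            have sub: "K \<subseteq> dil_set K e" unfolding dil_set_def by auto
            have dM: "measure M (dil_set K e) - measure M K = measure M (dil_set K e - K)"
              using M.finite_measure_Diff[OF True KS sub] by simp
            have dN: "measure N (dil_set K e) - measure N K = measure N (dil_set K e - K)"
              using N.finite_measure_Diff[of "dil_set K e" K] True KS sub sN by simp
            have D: "dil_set K e - K \<in> sets M" using True KS by (rule sets.Diff)
            have "(1/b) * ((measure M (dil_set K e) - measure M K) / e) \<le> (measure N (dil_set K e) - measure N K) / e"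
              using lom[OF D] dM dN e0 by (intro div_helper) auto
            moreover have "y' \<le> (1/b) * z"
            proof (cases "y' \<ge> 0")
              case True then show ?thesis unfolding z_def using b0 by simp
            next
              case False
              have "y' / b / b \<ge> y'"
              proof -
                have "y' / b \<ge> y'" using False assms(10) by (intro neg_div_ge) auto
                moreover have "y' / b / b \<ge> y' / b" using False assms(10) b0 by (intro neg_div_ge) (auto simp: divide_nonpos_pos)
                ultimately show ?thesis by linarith
              qed
              then show ?thesis unfolding z_def using False by simp
            qed
            moreover have "(1/b) * z < (1/b) * ((measure M (dil_set K e) - measure M K) / e)"
              using ez b0 by (intro mult_strict_left_mono) auto
            ultimately show ?thesis by linarith
          next
            case False
            then have "dil_set K e \<notin> sets N" using sN by simp
            then have eq: "measure N (dil_set K e) = 0" "measure M (dil_set K e) = 0"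
              using False by (auto simp: measure_notin_sets)
            have "b * ((measure M (dil_set K e) - measure M K) / e) \<le> (measure N (dil_set K e) - measure N K) / e"
              using upm[OF KS] eq e0 by (intro div_helper) auto
            moreover have "y' \<le> b * z"
            proof (cases "y' \<ge> 0")
              case True
              have "y' \<le> y' * b" using True assms(10) by (intro pos_mul_ge) auto
              also have "\<dots> \<le> y' * b * b" using True assms(10) by (intro pos_mul_ge) auto
              finally have "y' \<le> y' * b * b" .
              then show ?thesis unfolding z_def using True by (simp add: algebra_simps)
            next
              case False then show ?thesis unfolding z_def using b0 by simp
            qed
            moreover have "b * z < b * ((measure M (dil_set K e) - measure M K) / e)"
              using ez b0 by (intro mult_strict_left_mono) auto
            ultimately show ?thesis by linarith
          qed
          then show "y < ereal ((measure N (dil_set K e) - measure N K) / e)" using real by simp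
        qed
      qed (use y in auto)
    qed
  qed
qed

end
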